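(* Let $n\ge4$, $0<\alpha_2,\alpha_3<1$, $\alpha_1=1-\alpha_2-\alpha_3$, $\lambda^*=\big(\frac{n-1+\alpha_1}{n},\frac{\alpha_2}{n},\frac{\alpha_3}{n}\big)$. Then $$\sum_{i_2=0}^{n}|l_{(n-i_2,i_2,0)}(\lambda^* )|\le\frac{2^{n+1}}{e\,n(\ln n-\ln2)}\Big(1+\frac{15}{n-3}\Big)\Big(1+\frac{e(\ln n-1)\,n(n+1)}{2^{n+1}}\Big),$$ $$\sum_{i_3=1}^{n}|l_{(n-i_3,0,i_3)}(\lambda^* )|\le\frac{2^{n+1}}{e\,n(\ln n-\ln2)}\Big(1+\frac{15}{n-3}\Big)\Big(1+\frac{e(\ln n-1)\,n^2}{2^{n+1}}\Big).$$
   Context: For an integer $n\ge1$ and $i=(i_1,i_2,i_3)\in\mathbb{Z}_+^3$ with $i_1+i_2+i_3=n$, $l_i(\lambda)=\prod_{s=1}^{3}\frac{1}{i_s!}\prod_{t=0}^{i_s-1}(n\lambda_s-t)$ for $\lambda=(\lambda_1,\lambda_2,\lambda_3)$ (Lagrange fundamental polynomials for the equally spaced nodes $i/n$ of a triangle in barycentric coordinates). *)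

theory Defs
  imports "HOL-Analysis.Analysis"
begin

text \<open>Lagrange fundamental polynomial for the equally spaced nodes i/n of a triangle,
  in barycentric coordinates. Index i = (i1,i2,i3) with i1+i2+i3 = n,
  point lam = (lam1,lam2,lam3).\<close>

definition lag_factor :: "nat \<Rightarrow> nat \<Rightarrow> real \<Rightarrow> real" where
  "lag_factor n k x = (1 / fact k) * (\<Prod>t<k. real n * x - real t)"

definition lagrange_l :: "nat \<Rightarrow> nat \<times> nat \<times> nat \<Rightarrow> real \<times> real \<times> real \<Rightarrow> real" where
  "lagrange_l n i lam =
     (case i of (i1, i2, i3) \<Rightarrow> case lam of (l1, l2, l3) \<Rightarrow>
        lag_factor n i1 l1 * lag_factor n i2 l2 * lag_factor n i3 l3)"

end

theory Submission
  imports Defs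
begin

lemma harm_lower:
  assumes "n \<ge> 1"
  shows "(\<Sum>m\<in>{2..n}. 1 / real m) \<ge> ln (real n + 1) - ln 2"
  using assms
proof (induction n rule: dec_induct)
  case base
  then show ?case by (simp add: numeral_2_eq_2)
next
  case (step n)
  have e: "1 + 1 / (real n + 1) = (real (Suc n) + 1) / (real n + 1)"
    by (simp add: field_simps)
  have "ln (real (Suc n) + 1) - ln (real n + 1) = ln (1 + 1 / (real n + 1))"
    unfolding e by (subst ln_div) auto
  also have "\<dots> \<le> 1 / (real n + 1)"
    by (rule ln_add_one_self_le_self) simp
  finally have "ln (real (Suc n) + 1) - ln (real n + 1) \<le> 1 / real (Suc n)"
    by (simp add: add.commute)
  moreover have "(\<Sum>m\<in>{2..Suc n}. 1 / real m) = (\<Sum>m\<in>{2..n}. 1 / real m) + 1 / real (Suc n)"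
    using step by simp
  ultimately show ?case using step by linarith
qed

lemma G_bound:
  assumes n: "n \<ge> 4" and b: "0 < b" "b < 1"
  shows "b * (\<Prod>m\<in>{2..n}. 1 - b / real m) \<le> 1 / (exp 1 * (ln (real n) - ln 2))"
proof -
  define L where "L = ln (real n) - ln 2"
  have L0: "L > 0" unfolding L_def using n by (simp add: ln_less_cancel_iff)
  define H where "H = (\<Sum>m\<in>{2..n}. 1 / real m)"
  have HL: "H \<ge> L"
  proof -
    have "H \<ge> ln (real n + 1) - ln 2" unfolding H_def using harm_lower[of n] n by simp
    moreover have "ln (real n) \<le> ln (real n + 1)" using n by simp
    ultimately show ?thesis unfolding L_def by linarith
  qed
  have "(\<Prod>m\<in>{2..n}. 1 - b / real m) \<le> (\<Prod>m\<in>{2..n}. exp (- (b * (1 / real m))))"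
  proof (rule prod_mono)
    fix m assume m: "m \<in> {2..n}"
    then have "b / real m \<le> 1" using b by (simp add: divide_le_eq)
    then show "0 \<le> 1 - b / real m \<and> 1 - b / real m \<le> exp (- (b * (1 / real m)))"
      using exp_ge_add_one_self[of "- (b * (1 / real m))"] by simp
  qed
  also have "\<dots> = exp (- (b * H))"
    unfolding H_def by (simp add: exp_sum[symmetric] sum_distrib_left sum_negf)
  also have "\<dots> \<le> exp (- (b * L))" using HL b by simp
  finally have G: "(\<Prod>m\<in>{2..n}. 1 - b / real m) \<le> exp (- (b * L))" .
  have key: "exp 1 * (b * L) \<le> exp (b * L)"
  proof -
    have "b * L \<le> exp (b * L - 1)" using exp_ge_add_one_self[of "b * L - 1"] by simp
    then have "exp 1 * (b * L) \<le> exp 1 * exp (b * L - 1)" by simp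
    also have "\<dots> = exp (b * L)" by (simp add: exp_add[symmetric])
    finally show ?thesis .
  qed
  have "b * (\<Prod>m\<in>{2..n}. 1 - b / real m) \<le> b * exp (- (b * L))"
    using G b by simp
  also have "\<dots> \<le> 1 / (exp 1 * L)"
  proof -
    have "b * exp (- (b * L)) = (b * L) / (L * exp (b * L))"
      using L0 by (simp add: exp_minus field_simps)
    also have "\<dots> \<le> (b * L) / (L * (exp 1 * (b * L)))"
      using key L0 b by (intro divide_left_mono mult_left_mono) (auto intro!: mult_pos_pos)
    also have "\<dots> = 1 / (exp 1 * L)" using L0 b by (simp add: field_simps)
    finally show ?thesis .
  qed
  finally show ?thesis unfolding L_def .
qed

lemma term_bound:
  assumes k: "1 \<le> k" "k \<le> n" and b: "0 < b" "b < 1" and a: "-1 < a" "a < 1 - b"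
  shows "\<bar>(\<Prod>t<n-k. real n - 1 + a - real t) / fact (n-k) * ((\<Prod>t<k. b - real t) / fact k)\<bar>
     \<le> real (n choose k) * ((1 - b) / (real k - b)) * (b * (\<Prod>m\<in>{2..n}. 1 - b / real m))"
proof -
  define P1 where "P1 = (\<Prod>m\<in>{Suc k..n}. real m - b)"
  define P0 where "P0 = (\<Prod>m\<in>{1..<k}. real m - b)"
  define G where "G = (\<Prod>m\<in>{2..n}. 1 - b / real m)"
  have h1: "\<bar>\<Prod>t<n-k. real n - 1 + a - real t\<bar> \<le> (\<Prod>t<n-k. real n - b - real t)"
    unfolding abs_prod
  proof (rule prod_mono)
    fix t assume "t \<in> {..<n-k}"
    then have "real t + 2 \<le> real n" using k by auto
    then show "0 \<le> \<bar>real n - 1 + a - real t\<bar> \<and> \<bar>real n - 1 + a - real t\<bar> \<le> real n - b - real t"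
      using a by auto
  qed
  have h2: "(\<Prod>t<n-k. real n - b - real t) = P1"
    unfolding P1_def
    by (rule prod.reindex_bij_witness[of _ "\<lambda>m. n - m" "\<lambda>t. n - t"]) (use k in \<open>auto simp: of_nat_diff\<close>)
  have h3: "\<bar>\<Prod>t<k. b - real t\<bar> = b * P0"
  proof -
    have "{..<k} = insert 0 {1..<k}" using k by auto
    then have "\<bar>\<Prod>t<k. b - real t\<bar> = \<bar>b\<bar> * (\<Prod>t\<in>{1..<k}. \<bar>b - real t\<bar>)"
      by (simp add: abs_prod abs_mult)
    also have "(\<Prod>t\<in>{1..<k}. \<bar>b - real t\<bar>) = P0"
      unfolding P0_def by (rule prod.cong) (use b in auto)
    finally show ?thesis using b by simp
  qed
  have h4: "(\<Prod>m\<in>{1..n}. real m - b) = P0 * ((real k - b) * P1)"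
  proof -
    have "{1..n} = {1..<k} \<union> {k..n}" using k by auto
    then have "(\<Prod>m\<in>{1..n}. real m - b) = P0 * (\<Prod>m\<in>{k..n}. real m - b)"
      unfolding P0_def by (subst prod.union_disjoint[symmetric]) auto
    also have "(\<Prod>m\<in>{k..n}. real m - b) = (real k - b) * P1"
      unfolding P1_def using k by (simp add: prod.atLeast_Suc_atMost)
    finally show ?thesis .
  qed
  have h5: "(\<Prod>m\<in>{1..n}. real m - b) = fact n * ((1 - b) * G)"
  proof -
    have "(\<Prod>m\<in>{1..n}. real m - b) = (\<Prod>m\<in>{1..n}. real m * (1 - b / real m))"
      by (rule prod.cong) (auto simp: field_simps)
    also have "\<dots> = (\<Prod>m\<in>{1..n}. real m) * (\<Prod>m\<in>{1..n}. 1 - b / real m)"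
      by (simp add: prod.distrib)
    also have "(\<Prod>m\<in>{1..n}. real m) = fact n" by (simp add: fact_prod)
    also have "(\<Prod>m\<in>{1..n}. 1 - b / real m) = (1 - b) * G"
      unfolding G_def using k by (simp add: prod.atLeast_Suc_atMost numeral_2_eq_2)
    finally show ?thesis .
  qed
  have kb: "real k - b > 0" using k b by linarith
  have P1nn: "P1 \<ge> 0" unfolding P1_def using b by (intro prod_nonneg) auto
  have "\<bar>(\<Prod>t<n-k. real n - 1 + a - real t) / fact (n-k) * ((\<Prod>t<k. b - real t) / fact k)\<bar>
      = \<bar>\<Prod>t<n-k. real n - 1 + a - real t\<bar> * \<bar>\<Prod>t<k. b - real t\<bar> / (fact (n-k) * fact k)"
    by (simp add: abs_mult)
  also have "\<dots> \<le> P1 * (b * P0) / (fact (n-k) * fact k)"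
  proof -
    have "\<bar>\<Prod>t<n-k. real n - 1 + a - real t\<bar> * \<bar>\<Prod>t<k. b - real t\<bar> \<le> P1 * \<bar>\<Prod>t<k. b - real t\<bar>"
      using h1 h2 by (intro mult_right_mono) auto
    then show ?thesis using h3 by (intro divide_right_mono) auto
  qed
  also have "P1 * (b * P0) = b * (fact n * ((1 - b) * G)) / (real k - b)"
  proof -
    have e: "P0 * P1 * (real k - b) = fact n * ((1 - b) * G)" using h4 h5 by (simp add: algebra_simps)
    have "P1 * (b * P0) = b * (P0 * P1 * (real k - b)) / (real k - b)" using kb by simp
    then show ?thesis unfolding e .
  qed
  also have "b * (fact n * ((1 - b) * G)) / (real k - b) / (fact (n-k) * fact k)
     = (fact n / (fact k * fact (n - k))) * ((1 - b) / (real k - b)) * (b * G)"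
    by (simp add: field_simps)
  also have "fact n / (fact k * fact (n - k)) = (real (n choose k))"
    using binomial_fact[OF k(2), where ?'a=real] by simp
  finally show ?thesis unfolding G_def .
qed

lemma choose_shift_sum: "(\<Sum>k=0..n. m choose (k + j)) \<le> (2::nat) ^ m"
proof -
  let ?S = "(\<lambda>k. k + j) ` {0..n}"
  have "(\<Sum>k=0..n. m choose (k + j)) = (\<Sum>i\<in>?S. m choose i)"
    by (subst sum.reindex) (auto simp: inj_on_def)
  also have "\<dots> = (\<Sum>i\<in>?S \<inter> {..m}. m choose i)"
    by (rule sum.mono_neutral_right) auto
  also have "\<dots> \<le> (\<Sum>i\<in>{..m}. m choose i)"
    by (rule sum_mono2) auto
  also have "\<dots> = 2 ^ m" by (rule choose_row_sum)
  finally show ?thesis .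
qed

lemma choose_div1: "real (n choose k) / (real k + 1) = real (Suc n choose Suc k) / (real n + 1)"
proof -
  have "real (Suc k) * real (Suc n choose Suc k) = real (Suc n) * real (n choose k)"
    using Suc_times_binomial[of k n] by (metis of_nat_mult)
  then show ?thesis by (simp add: field_simps)
qed

lemma binsum:
  "(\<Sum>k=0..n. real (n choose k) * (1 / (real k + 1) + 8 / ((real k + 1) * (real k + 2))))
     \<le> 2 ^ (n + 1) / (real n + 1) + 8 * 2 ^ (n + 2) / ((real n + 1) * (real n + 2))"
proof -
  have e: "real (n choose k) * (1 / (real k + 1) + 8 / ((real k + 1) * (real k + 2)))
     = real (Suc n choose (k + 1)) / (real n + 1) + 8 * (real (Suc (Suc n) choose (k + 2)) / ((real n + 1) * (real n + 2)))" for k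
  proof -
    have 1: "real (n choose k) / (real k + 1) = real (Suc n choose Suc k) / (real n + 1)" by (rule choose_div1)
    have 2: "real (Suc n choose Suc k) / (real (Suc k) + 1) = real (Suc (Suc n) choose Suc (Suc k)) / (real (Suc n) + 1)"
      by (rule choose_div1)
    have "real (n choose k) / ((real k + 1) * (real k + 2)) = (real (n choose k) / (real k + 1)) / (real k + 2)"
      by (simp only: divide_divide_eq_left)
    also have "\<dots> = real (Suc n choose Suc k) / (real n + 1) / (real k + 2)"
      unfolding 1 ..
    also have "\<dots> = real (Suc n choose Suc k) / (real (Suc k) + 1) / (real n + 1)"
      by (simp add: field_simps del: binomial_Suc_Suc)
    also have "\<dots> = real (Suc (Suc n) choose Suc (Suc k)) / ((real n + 1) * (real n + 2))"
      unfolding 2 by (simp add: field_simps del: binomial_Suc_Suc)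
    finally have 3: "real (n choose k) / ((real k + 1) * (real k + 2)) = real (Suc (Suc n) choose Suc (Suc k)) / ((real n + 1) * (real n + 2))" .
    have "real (n choose k) * (1 / (real k + 1) + 8 / ((real k + 1) * (real k + 2)))
       = real (n choose k) / (real k + 1) + 8 * (real (n choose k) / ((real k + 1) * (real k + 2)))"
      by (simp add: field_simps del: binomial_Suc_Suc)
    then show ?thesis unfolding 1 3 by (simp del: binomial_Suc_Suc)
  qed
  have s1: "(\<Sum>k=0..n. real (Suc n choose (k + 1))) \<le> 2 ^ (n + 1)"
  proof -
    have "(\<Sum>k=0..n. Suc n choose (k + 1)) \<le> 2 ^ (Suc n)" by (rule choose_shift_sum)
    then have "real (\<Sum>k=0..n. Suc n choose (k + 1)) \<le> real (2 ^ (Suc n))" by (simp only: of_nat_le_iff)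
    then show ?thesis by (simp only: of_nat_sum of_nat_power of_nat_numeral Suc_eq_plus1)
  qed
  have s2: "(\<Sum>k=0..n. real (Suc (Suc n) choose (k + 2))) \<le> 2 ^ (n + 2)"
  proof -
    have "(\<Sum>k=0..n. Suc (Suc n) choose (k + 2)) \<le> 2 ^ (Suc (Suc n))" by (rule choose_shift_sum)
    then have "real (\<Sum>k=0..n. Suc (Suc n) choose (k + 2)) \<le> real (2 ^ (Suc (Suc n)))" by (simp only: of_nat_le_iff)
    then show ?thesis by (simp only: of_nat_sum of_nat_power of_nat_numeral add_2_eq_Suc')
  qed
  have "(\<Sum>k=0..n. real (n choose k) * (1 / (real k + 1) + 8 / ((real k + 1) * (real k + 2))))
     = (\<Sum>k=0..n. real (Suc n choose (k + 1))) / (real n + 1) + 8 * ((\<Sum>k=0..n. real (Suc (Suc n) choose (k + 2))) / ((real n + 1) * (real n + 2)))"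
    unfolding e by (simp add: sum.distrib sum_divide_distrib sum_distrib_left del: binomial_Suc_Suc)
  also have "\<dots> \<le> 2 ^ (n + 1) / (real n + 1) + 8 * (2 ^ (n + 2) / ((real n + 1) * (real n + 2)))"
    using s1 s2 by (intro add_mono mult_left_mono divide_right_mono) auto
  finally show ?thesis by simp
qed

lemma wk_bound:
  assumes k: "2 \<le> k" and b: "0 < b" "b < 1"
  shows "(1 - b) / (real k - b) \<le> 1 / (real k + 1) + 8 / ((real k + 1) * (real k + 2))"
proof -
  have k2: "real k \<ge> 2" using k by simp
  have "b * 2 \<le> b * real k" using k2 b by simp
  then have "(1 - b) * (real k - 1) \<le> real k - b" by (simp add: algebra_simps)
  then have "(1 - b) / (real k - b) \<le> 1 / (real k - 1)"
    using k2 b by (simp add: field_simps)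
  also have "1 / (real k - 1) \<le> 1 / (real k + 1) + 8 / ((real k + 1) * (real k + 2))"
  proof -
    have "(real k + 1) * (real k + 2) \<le> (real k + 10) * (real k - 1)" using k2 by (simp add: algebra_simps)
    then have "1 / (real k - 1) \<le> (real k + 10) / ((real k + 1) * (real k + 2))"
      using k2 apply (subst frac_le_eq) apply simp apply simp
      apply (rule divide_nonpos_pos) apply simp apply (intro mult_pos_pos) apply auto
      done
    also have "\<dots> = (real k + 2) / ((real k + 1) * (real k + 2)) + 8 / ((real k + 1) * (real k + 2))"
      by (subst add_divide_distrib[symmetric]) (simp add: algebra_simps)
    also have "(real k + 2) / ((real k + 1) * (real k + 2)) = 1 / (real k + 1)"
      using k2 by simp
    finally show ?thesis .
  qed
  finally show ?thesis .
qed

lemma sum_bound: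
  assumes n: "n \<ge> 4" and b: "0 < b" "b < 1" and a: "-1 < a" "a < 1 - b"
  shows "(\<Sum>k=1..n. \<bar>(\<Prod>t<n-k. real n - 1 + a - real t) / fact (n-k) * ((\<Prod>t<k. b - real t) / fact k)\<bar>)
    \<le> (real n + (2 ^ (n + 1) / (real n + 1) + 8 * 2 ^ (n + 2) / ((real n + 1) * (real n + 2))))
        / (exp 1 * (ln (real n) - ln 2))"
proof -
  define L where "L = ln (real n) - ln 2"
  have L0: "L > 0" unfolding L_def using n by (simp add: ln_less_cancel_iff)
  define M where "M = b * (\<Prod>m\<in>{2..n}. 1 - b / real m)"
  have M: "M \<le> 1 / (exp 1 * L)" unfolding M_def L_def using G_bound[OF n b] .
  have M0: "M \<ge> 0" unfolding M_def using b by (intro mult_nonneg_nonneg prod_nonneg) (auto simp: divide_le_eq)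
  define w where "w k = 1 / (real k + 1) + 8 / ((real k + 1) * (real k + 2))" for k :: nat
  have w0: "w k \<ge> 0" for k unfolding w_def by simp
  have each: "\<bar>(\<Prod>t<n-k. real n - 1 + a - real t) / fact (n-k) * ((\<Prod>t<k. b - real t) / fact k)\<bar>
      \<le> ((if k = 1 then real n else 0) + real (n choose k) * w k) * M" if k: "k \<in> {1..n}" for k
  proof -
    have "\<bar>(\<Prod>t<n-k. real n - 1 + a - real t) / fact (n-k) * ((\<Prod>t<k. b - real t) / fact k)\<bar>
      \<le> real (n choose k) * ((1 - b) / (real k - b)) * M"
      unfolding M_def using term_bound[of k n b a] k b a by auto
    also have "real (n choose k) * ((1 - b) / (real k - b)) \<le> (if k = 1 then real n else 0) + real (n choose k) * w k"
    proof (cases "k = 1")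
      case True
      then show ?thesis using b w0[of 1] by simp
    next
      case False
      then have "k \<ge> 2" using k by auto
      then have "(1 - b) / (real k - b) \<le> w k" unfolding w_def using wk_bound b by blast
      then have "real (n choose k) * ((1 - b) / (real k - b)) \<le> real (n choose k) * w k"
        by (intro mult_left_mono) auto
      then show ?thesis using False by simp
    qed
    then have "real (n choose k) * ((1 - b) / (real k - b)) * M \<le> ((if k = 1 then real n else 0) + real (n choose k) * w k) * M"
      using M0 by (rule mult_right_mono)
    finally show ?thesis .
  qed
  have "(\<Sum>k=1..n. \<bar>(\<Prod>t<n-k. real n - 1 + a - real t) / fact (n-k) * ((\<Prod>t<k. b - real t) / fact k)\<bar>)
     \<le> (\<Sum>k=1..n. ((if k = 1 then real n else 0) + real (n choose k) * w k) * M)"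
    by (rule sum_mono) (rule each)
  also have "\<dots> = (real n + (\<Sum>k=1..n. real (n choose k) * w k)) * M"
  proof -
    have "(\<Sum>k=1..n. (if k = 1 then real n else 0)) = real n" using n by (simp add: sum.delta)
    then show ?thesis by (simp only: sum_distrib_right[symmetric] sum.distrib)
  qed
  also have "(\<Sum>k=1..n. real (n choose k) * w k) \<le> (\<Sum>k=0..n. real (n choose k) * w k)"
    using w0[of 0] by (simp add: sum.atLeast_Suc_atMost[of 0 n])
  also have "(\<Sum>k=0..n. real (n choose k) * w k) \<le> 2 ^ (n + 1) / (real n + 1) + 8 * 2 ^ (n + 2) / ((real n + 1) * (real n + 2))"
    unfolding w_def by (rule binsum)
  finally have "(\<Sum>k=1..n. \<bar>(\<Prod>t<n-k. real n - 1 + a - real t) / fact (n-k) * ((\<Prod>t<k. b - real t) / fact k)\<bar>)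
     \<le> (real n + (2 ^ (n + 1) / (real n + 1) + 8 * 2 ^ (n + 2) / ((real n + 1) * (real n + 2)))) * M"
    using M0 by (simp add: mult_right_mono)
  also have "\<dots> \<le> (real n + (2 ^ (n + 1) / (real n + 1) + 8 * 2 ^ (n + 2) / ((real n + 1) * (real n + 2)))) * (1 / (exp 1 * L))"
    using M by (intro mult_left_mono) auto
  finally show ?thesis unfolding L_def by simp
qed

lemma lag_eq: "n > 0 \<Longrightarrow> lag_factor n k (y / real n) = (\<Prod>t<k. y - real t) / fact k"
  by (simp add: lag_factor_def)

lemma T0_bound:
  assumes "-1 < a" "a < 1"
  shows "\<bar>(\<Prod>t<n. real n - 1 + a - real t) / fact n\<bar> \<le> 1"
proof -
  have "\<bar>\<Prod>t<n. real n - 1 + a - real t\<bar> \<le> (\<Prod>t<n. real n - real t)"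
    unfolding abs_prod
  proof (rule prod_mono)
    fix t assume "t \<in> {..<n}"
    then have "real t + 1 \<le> real n" by auto
    then show "0 \<le> \<bar>real n - 1 + a - real t\<bar> \<and> \<bar>real n - 1 + a - real t\<bar> \<le> real n - real t"
      using assms by auto
  qed
  also have "(\<Prod>t<n. real n - real t) = (\<Prod>m\<in>{1..n}. real m)"
    by (rule prod.reindex_bij_witness[of _ "\<lambda>m. n - m" "\<lambda>t. n - t"]) (auto simp: of_nat_diff)
  also have "\<dots> = fact n" by (simp add: fact_prod)
  finally show ?thesis by (simp add: abs_div)
qed

lemma F1:
  assumes n: "n \<ge> 4"
  shows "2 ^ (n + 1) / (real n + 1) + 8 * 2 ^ (n + 2) / ((real n + 1) * (real n + 2))
     \<le> 2 ^ (n + 1) / real n * (1 + 15 / (real n - 3))"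
proof -
  define N where "N = real n"
  have N: "N \<ge> 4" unfolding N_def using n by simp
  define P :: real where "P = 2 ^ (n + 1)"
  have P0: "P > 0" unfolding P_def by simp
  have "2 ^ (n + 1) / (real n + 1) + 8 * 2 ^ (n + 2) / ((real n + 1) * (real n + 2))
      = P * ((N + 18) / ((N + 1) * (N + 2)))"
  proof -
    have e2: "(2::real) ^ (n + 2) = 2 * P" unfolding P_def by simp
    have "P / (N + 1) = (P * (N + 2)) / ((N + 1) * (N + 2))" using N by simp
    then have "P / (N + 1) + 8 * (2 * P) / ((N + 1) * (N + 2)) = (P * (N + 2) + 8 * (2 * P)) / ((N + 1) * (N + 2))"
      by (simp add: add_divide_distrib)
    also have "P * (N + 2) + 8 * (2 * P) = P * (N + 18)" by (simp add: algebra_simps)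
    finally have "P / (N + 1) + 8 * (2 * P) / ((N + 1) * (N + 2)) = P * ((N + 18) / ((N + 1) * (N + 2)))" by simp
    then show ?thesis unfolding e2 unfolding P_def N_def .
  qed
  also have "(N + 18) / ((N + 1) * (N + 2)) \<le> (N + 12) / (N * (N - 3))"
  proof -
    have "(N + 18) * (N * (N - 3)) \<le> (N + 12) * ((N + 1) * (N + 2))"
      using N by (simp add: algebra_simps)
    then show ?thesis using N
      apply (subst frac_le_eq) apply simp apply simp
      apply (rule divide_nonpos_pos) apply (simp add: algebra_simps) apply (intro mult_pos_pos) apply auto
      done
  qed
  also have "(N + 12) / (N * (N - 3)) = 1 / N * (1 + 15 / (N - 3))"
    using N by (simp add: field_simps)
  finally have "2 ^ (n + 1) / (real n + 1) + 8 * 2 ^ (n + 2) / ((real n + 1) * (real n + 2))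
      \<le> P * (1 / N * (1 + 15 / (N - 3)))" using P0 by simp
  then show ?thesis unfolding P_def N_def by simp
qed

lemma logs:
  assumes n: "n \<ge> 4"
  shows "ln (real n) \<ge> 4/3" "n \<ge> 8 \<Longrightarrow> ln (real n) \<ge> 2" "ln 2 > (0::real)" "exp 1 \<ge> (2::real)"
proof -
  have l2: "ln (2::real) \<ge> 2/3" by (rule ln2_ge_two_thirds)
  have "ln (real n) \<ge> ln 4" using n by simp
  moreover have "ln (4::real) = 2 * ln 2"
    using ln_realpow[of 2 2] by simp
  ultimately show "ln (real n) \<ge> 4/3" using l2 by linarith
  show "ln (real n) \<ge> 2" if "n \<ge> 8"
  proof -
    have "ln (real n) \<ge> ln 8" using that by simp
    moreover have "ln (8::real) = 3 * ln 2"
      using ln_realpow[of 2 3] by simp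
    ultimately show ?thesis using l2 by linarith
  qed
  show "ln 2 > (0::real)" by simp
  show "exp 1 \<ge> (2::real)" using exp_ge_add_one_self[of "1::real"] by simp
qed

lemma core1:
  fixes N x E l2 c :: real
  assumes N: "N \<ge> 4" and x: "x \<ge> 4/3" and x2: "N > 7 \<Longrightarrow> x \<ge> 2" and E: "E \<ge> 2"
    and l2: "l2 > 0" and L: "x - l2 > 0" and c: "c = 1 + 15 / (N - 3)"
  shows "1 + N / (E * (x - l2)) \<le> c * (x - 1) * (N + 1) / (x - l2)"
proof -
  have cN: "c * (N + 1) \<ge> N + 12"
  proof -
    have "c = (N + 12) / (N - 3)" unfolding c using N by (simp add: field_simps)
    then have "c * (N + 1) = (N + 12) * ((N + 1) / (N - 3))" by simp
    moreover have "(N + 1) / (N - 3) \<ge> 1" using N by simp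
    ultimately show ?thesis using N by (metis mult_left_mono mult.right_neutral add_nonneg_nonneg linorder_not_le less_le_trans zero_le_numeral mult_le_cancel_left1 order.trans dual_order.trans)
  qed
  have key: "3 * N / 2 + 12 \<le> x * (N + 11)"
  proof (cases "N \<le> 7")
    case True
    have "x * (N + 11) \<ge> 4/3 * (N + 11)" using x N by (intro mult_right_mono) auto
    moreover have "4/3 * (N + 11) = 4/3 * N + 44/3" by (simp add: algebra_simps)
    ultimately show ?thesis using True by linarith
  next
    case False
    have "x * (N + 11) \<ge> 2 * (N + 11)" using x2 False N by (intro mult_right_mono) auto
    moreover have "2 * (N + 11) = 2 * N + 22" by (simp add: algebra_simps)
    ultimately show ?thesis using N by linarith
  qed
  have NE: "N / E \<le> N / 2" using E N by (intro divide_left_mono) auto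
  have "(x - 1) * (N + 12) = x * (N + 11) + x - N - 12" by (simp add: algebra_simps)
  then have "(x - l2) + N / E \<le> (x - 1) * (N + 12)" using key NE l2 by linarith
  also have "\<dots> \<le> (x - 1) * (c * (N + 1))" using cN x by (intro mult_left_mono) auto
  finally have "(x - l2) + N / E \<le> c * (x - 1) * (N + 1)" by (simp add: algebra_simps)
  then have "((x - l2) + N / E) / (x - l2) \<le> c * (x - 1) * (N + 1) / (x - l2)"
    using L by (intro divide_right_mono) auto
  moreover have "((x - l2) + N / E) / (x - l2) = 1 + N / (E * (x - l2))"
    using L E by (simp add: field_simps)
  ultimately show ?thesis by simp
qed

lemma core2:
  fixes N x E l2 c :: real
  assumes N: "N \<ge> 4" and x: "x \<ge> 4/3" and x2: "N > 7 \<Longrightarrow> x \<ge> 2" and E: "E \<ge> 2"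
    and L: "x - l2 > 0" and c: "c = 1 + 15 / (N - 3)"
  shows "N / (E * (x - l2)) \<le> c * (x - 1) * N / (x - l2)"
proof -
  have "1 / E \<le> c * (x - 1)"
  proof (cases "N \<le> 7")
    case True
    have "15 / (N - 3) \<ge> 15 / 4" using True N by (intro divide_left_mono) auto
    then have "c \<ge> 3" unfolding c by linarith
    then have "c * (x - 1) \<ge> 3 * (1/3)" using x by (intro mult_mono) auto
    moreover have "1 / E \<le> 1/2" using E by simp
    ultimately show ?thesis by linarith
  next
    case False
    have "c \<ge> 1" unfolding c using N by simp
    then have "c * (x - 1) \<ge> 1 * 1" using x2 False by (intro mult_mono) auto
    moreover have "1 / E \<le> 1/2" using E by simp
    ultimately show ?thesis by linarith
  qed
  then have "N * (1 / E) \<le> N * (c * (x - 1))" using N by (intro mult_left_mono) auto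
  then have "N * (1 / E) / (x - l2) \<le> N * (c * (x - 1)) / (x - l2)" using L by (intro divide_right_mono) auto
  then show ?thesis by (simp add: algebra_simps)
qed

lemma id1:
  fixes E N L P c y :: real
  assumes "E \<noteq> 0" "N \<noteq> 0" "L \<noteq> 0" "P \<noteq> 0"
  shows "P / (E * N * L) * c * (1 + E * y * N * (N + 1) / P) = (P / N * c) / (E * L) + c * y * (N + 1) / L"
  using assms by (simp add: field_simps)
lemma id2:
  fixes E N L P c y :: real
  assumes "E \<noteq> 0" "N \<noteq> 0" "L \<noteq> 0" "P \<noteq> 0"
  shows "P / (E * N * L) * c * (1 + E * y * N ^ 2 / P) = (P / N * c) / (E * L) + c * y * N / L"
  using assms by (simp add: field_simps power2_eq_square)

lemma fin1:
  fixes N x E l2 c P B :: real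
  assumes N: "N \<ge> 4" and x: "x \<ge> 4/3" and x2: "N > 7 \<Longrightarrow> x \<ge> 2" and E: "E \<ge> 2"
    and l2: "l2 > 0" and L: "x - l2 > 0" and c: "c = 1 + 15 / (N - 3)" and P: "P > 0"
    and B: "B \<le> P / N * c"
  shows "1 + (N + B) / (E * (x - l2)) \<le> P / (E * N * (x - l2)) * c * (1 + E * (x - 1) * N * (N + 1) / P)"
proof -
  have r: "P / (E * N * (x - l2)) * c * (1 + E * (x - 1) * N * (N + 1) / P)
     = (P / N * c) / (E * (x - l2)) + c * (x - 1) * (N + 1) / (x - l2)"
    using id1[of E N "x - l2" P c "x - 1"] N E L P by simp
  have "B / (E * (x - l2)) \<le> (P / N * c) / (E * (x - l2))"
    using B E L by (intro divide_right_mono) auto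
  moreover have "1 + N / (E * (x - l2)) \<le> c * (x - 1) * (N + 1) / (x - l2)"
    by (rule core1[OF N x x2 E l2 L c])
  moreover have "(N + B) / (E * (x - l2)) = N / (E * (x - l2)) + B / (E * (x - l2))"
    by (simp add: add_divide_distrib)
  ultimately show ?thesis unfolding r by linarith
qed

lemma fin2:
  fixes N x E l2 c P B :: real
  assumes N: "N \<ge> 4" and x: "x \<ge> 4/3" and x2: "N > 7 \<Longrightarrow> x \<ge> 2" and E: "E \<ge> 2"
    and L: "x - l2 > 0" and c: "c = 1 + 15 / (N - 3)" and P: "P > 0"
    and B: "B \<le> P / N * c"
  shows "(N + B) / (E * (x - l2)) \<le> P / (E * N * (x - l2)) * c * (1 + E * (x - 1) * N ^ 2 / P)"
proof -
  have r: "P / (E * N * (x - l2)) * c * (1 + E * (x - 1) * N ^ 2 / P)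
     = (P / N * c) / (E * (x - l2)) + c * (x - 1) * N / (x - l2)"
    using id2[of E N "x - l2" P c "x - 1"] N E L P by simp
  have "B / (E * (x - l2)) \<le> (P / N * c) / (E * (x - l2))"
    using B E L by (intro divide_right_mono) auto
  moreover have "N / (E * (x - l2)) \<le> c * (x - 1) * N / (x - l2)"
    by (rule core2[OF N x x2 E L c])
  moreover have "(N + B) / (E * (x - l2)) = N / (E * (x - l2)) + B / (E * (x - l2))"
    by (simp add: add_divide_distrib)
  ultimately show ?thesis unfolding r by linarith
qed

theorem lemma27:
  fixes n :: nat and a1 a2 a3 :: real
  assumes "n \<ge> 4"
    and "0 < a2" and "a2 < 1" and "0 < a3" and "a3 < 1"
    and "a1 = 1 - a2 - a3"
  defines "lam \<equiv> ((real n - 1 + a1) / real n, a2 / real n, a3 / real n)"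
  shows "((\<Sum>i2 = 0..n. \<bar>lagrange_l n (n - i2, i2, 0) lam\<bar>)
           \<le> 2 ^ (n + 1) / (exp 1 * real n * (ln (real n) - ln 2))
             * (1 + 15 / (real n - 3))
             * (1 + exp 1 * (ln (real n) - 1) * real n * (real n + 1) / 2 ^ (n + 1))) \<and>
         ((\<Sum>i3 = 1..n. \<bar>lagrange_l n (n - i3, 0, i3) lam\<bar>)
           \<le> 2 ^ (n + 1) / (exp 1 * real n * (ln (real n) - ln 2))
             * (1 + 15 / (real n - 3))
             * (1 + exp 1 * (ln (real n) - 1) * (real n)^2 / 2 ^ (n + 1)))"
proof -
  have n: "n \<ge> 4" by (rule assms(1))
  have n0: "n > 0" using n by simp
  have a1b: "-1 < a1" "a1 < 1 - a2" "a1 < 1 - a3" "a1 < 1" using assms by auto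
  define B where "B = 2 ^ (n + 1) / (real n + 1) + 8 * 2 ^ (n + 2) / ((real n + 1) * (real n + 2))"
  have term2: "lagrange_l n (n - k, k, 0) lam = (\<Prod>t<n-k. real n - 1 + a1 - real t) / fact (n-k) * ((\<Prod>t<k. a2 - real t) / fact k)" for k
    unfolding lagrange_l_def lam_def
    using lag_eq[OF n0, of "n-k" "real n - 1 + a1"] lag_eq[OF n0, of k a2] lag_eq[OF n0, of 0 a3] by simp
  have term3: "lagrange_l n (n - k, 0, k) lam = (\<Prod>t<n-k. real n - 1 + a1 - real t) / fact (n-k) * ((\<Prod>t<k. a3 - real t) / fact k)" for k
    unfolding lagrange_l_def lam_def
    using lag_eq[OF n0, of "n-k" "real n - 1 + a1"] lag_eq[OF n0, of k a3] lag_eq[OF n0, of 0 a2] by simp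
  have S2: "(\<Sum>k=1..n. \<bar>lagrange_l n (n - k, k, 0) lam\<bar>) \<le> (real n + B) / (exp 1 * (ln (real n) - ln 2))"
    unfolding term2 B_def using sum_bound[OF n assms(2,3) a1b(1,2)] .
  have S3: "(\<Sum>k=1..n. \<bar>lagrange_l n (n - k, 0, k) lam\<bar>) \<le> (real n + B) / (exp 1 * (ln (real n) - ln 2))"
    unfolding term3 B_def using sum_bound[OF n assms(4,5) a1b(1,3)] .
  have T0: "\<bar>lagrange_l n (n - 0, 0, 0) lam\<bar> \<le> 1"
    unfolding term2 using T0_bound[OF a1b(1) a1b(4), of n] by simp
  have sum1: "(\<Sum>i2 = 0..n. \<bar>lagrange_l n (n - i2, i2, 0) lam\<bar>)
      = \<bar>lagrange_l n (n - 0, 0, 0) lam\<bar> + (\<Sum>k=1..n. \<bar>lagrange_l n (n - k, k, 0) lam\<bar>)"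
    by (simp add: sum.atLeast_Suc_atMost[of 0 n])
  have N: "real n \<ge> 4" using n by simp
  have lg: "ln (real n) \<ge> 4/3" "real n > 7 \<Longrightarrow> ln (real n) \<ge> 2" "ln 2 > (0::real)" "exp 1 \<ge> (2::real)"
    using logs[OF n] by auto
  have L: "ln (real n) - ln 2 > 0" using n by (simp add: ln_less_cancel_iff)
  have P: "(2::real) ^ (n + 1) > 0" by simp
  have Bb: "B \<le> 2 ^ (n + 1) / real n * (1 + 15 / (real n - 3))"
    unfolding B_def by (rule F1[OF n])
  note f1 = fin1[OF N lg(1) lg(2) lg(4) lg(3) L refl P Bb]
  note f2 = fin2[OF N lg(1) lg(2) lg(4) L refl P Bb]
  show ?thesis
  proof
    show "(\<Sum>i2 = 0..n. \<bar>lagrange_l n (n - i2, i2, 0) lam\<bar>)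
           \<le> 2 ^ (n + 1) / (exp 1 * real n * (ln (real n) - ln 2))
             * (1 + 15 / (real n - 3))
             * (1 + exp 1 * (ln (real n) - 1) * real n * (real n + 1) / 2 ^ (n + 1))"
      using sum1 T0 S2 f1 by linarith
    show "(\<Sum>i3 = 1..n. \<bar>lagrange_l n (n - i3, 0, i3) lam\<bar>)
           \<le> 2 ^ (n + 1) / (exp 1 * real n * (ln (real n) - ln 2))
             * (1 + 15 / (real n - 3))
             * (1 + exp 1 * (ln (real n) - 1) * (real n)^2 / 2 ^ (n + 1))"
      using S3 f2 by linarith
  qed
qed

end
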